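(* In the setting described in the context, for any $n\ge1$, any $1\le k\le n$ and any $\tau\in\mathcal{S}_{n-k}$, the map $P\mapsto L_P$ is constant on $$\mathcal{C}_{n,k}(\tau)=\{P\in\mathcal{C}_{n,k}:\mathcal{I}(\tau)\cap\Delta(P)\neq\emptyset\}.$$
   Context: Standing setup. Let $s,t>0$ with $s+t=1$, and let $\theta\in\mathbb{R}$ with $\inf_{q\in\mathbb{N}}q^{1/s}\|q\theta\|>0$, where $\|x\|$ is the distance from $x$ to the nearest integer. Let $\beta\in(0,1)$, let $A_0$ be a compact interval of length $l>0$, let $R=16\beta^{-4}$, and let $c=\min\{\inf_{q\in\mathbb{N}}q^{1/s}\|q\theta\|,\ \tfrac14 lR^{-1},\ \tfrac18R^{-2-3/t^2}\}$. Rational points are written $P=(p/q,r/q)$ with $q>0$ and $p,q,r$ coprime integers. Let $\mathcal{C}=\{(p/q,r/q)\in\mathbb{Q}^2:|\theta-p/q|<c/q^{1+s}\}$ and $\Delta(P)=\{y\in\mathbb{R}:|y-r/q|<c/q^{1+t}\}$. Non-vertical rational lines are written $L(A,B,C)=\{(x,y):y=(Ax+C)/B\}$ with $A,B,C$ coprime integers, $B>0$. For each $P=(p/q,r/q)\in\mathcal{C}$ fix a line $L_P=L(A_P,B_P,C_P)$ passing through $P$ with $|A_P|\le q^s$ and $B_P\le q^t$ (such a line exists). Let $H_n=4cl^{-1}R^n$ and $\mathcal{C}_n=\{P=(p/q,r/q)\in\mathcal{C}:H_n\le qB_P<H_{n+1}\}$ for $n\ge1$ (these partition $\mathcal{C}$).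 Let $\lambda=3/t^2$, $\mu=1/(t(1+t))$, $\mathcal{C}_{n,1}=\{P\in\mathcal{C}_n:H_{n+1}^{t/(1+t)}R^{-\lambda}\le B_P<H_{n+1}^{t/(1+t)}\}$ and, for $2\le k\le n$, $\mathcal{C}_{n,k}=\{P\in\mathcal{C}_n:H_{n+1}^{t/(1+t)}R^{-\lambda-(k-1)\mu}\le B_P<H_{n+1}^{t/(1+t)}R^{-\lambda-(k-2)\mu}\}$. Let $\mathcal{T}$ be an $[R]$-regular rooted tree with root $\tau_0$ ($[\cdot]$ = integer part), $\mathcal{T}_n$ its vertices of height $n$, and $\tau\prec\tau'$ meaning $\tau'$ is an ancestor of $\tau$ (possibly equal). Fix an injective map $\mathcal{I}$ from $\mathcal{T}$ to closed subintervals of $A_0$ with $|\mathcal{I}(\tau)|=lR^{-n}$ for $\tau\in\mathcal{T}_n$, $\mathcal{I}(\tau)\subset\mathcal{I}(\tau')$ whenever $\tau\prec\tau'$, and such that for each $\tau'$ the intervals $\mathcal{I}(\tau)$ over successors $\tau$ of $\tau'$ have pairwise disjoint interiors and connected union. Define $\mathcal{S}_0=\{\tau_0\}$ and for $n\ge1$, $\mathcal{S}_n=\{\tau:\tau$ is a successor of some vertex in $\mathcal{S}_{n-1}$ and $\mathcal{I}(\tau)\cap\bigcup_{P\in\mathcal{C}_n}\Delta(P)=\emptyset\}$. *)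

theory Defs
  imports "HOL-Analysis.Analysis"
begin

definition nint_dist :: "real \<Rightarrow> real" where
  "nint_dist x = min (frac x) (1 - frac x)"

definition dioph_const :: "real \<Rightarrow> real \<Rightarrow> real" where
  "dioph_const s \<theta> = (INF q\<in>{1::nat..}. real q powr (1/s) * nint_dist (real q * \<theta>))"

definition Rpar :: "real \<Rightarrow> real" where
  "Rpar \<beta> = 16 * \<beta> powr (-4)"

definition cpar :: "real \<Rightarrow> real \<Rightarrow> real \<Rightarrow> real \<Rightarrow> real \<Rightarrow> real" where
  "cpar s t \<theta> l R = min (dioph_const s \<theta>) (min (l / (4 * R)) (R powr (-2 - 3 / t^2) / 8))"

text \<open>A rational point (p/q, r/q) is represented by its unique normalised triple (p,q,r).\<close>
definition rat_point :: "int \<times> int \<times> int \<Rightarrow> bool" where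
  "rat_point P = (case P of (p, q, r) \<Rightarrow> q > 0 \<and> gcd (gcd p q) r = 1)"

definition Ccal :: "real \<Rightarrow> real \<Rightarrow> real \<Rightarrow> (int \<times> int \<times> int) set" where
  "Ccal s \<theta> c = {(p, q, r). rat_point (p, q, r) \<and>
      \<bar>\<theta> - of_int p / of_int q\<bar> < c / of_int q powr (1 + s)}"

definition Delta :: "real \<Rightarrow> real \<Rightarrow> int \<times> int \<times> int \<Rightarrow> real set" where
  "Delta t c P = (case P of (p, q, r) \<Rightarrow>
      {y. \<bar>y - of_int r / of_int q\<bar> < c / of_int q powr (1 + t)})"

text \<open>A non-vertical rational line L(A,B,C) = {(x,y). y = (A x + C)/B}, represented by (A,B,C).\<close>
definition line_ok :: "int \<times> int \<times> int \<Rightarrow> bool" where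
  "line_ok L = (case L of (A, B, C) \<Rightarrow> B > 0 \<and> gcd (gcd A B) C = 1)"

definition on_line :: "int \<times> int \<times> int \<Rightarrow> int \<times> int \<times> int \<Rightarrow> bool" where
  "on_line L P = (case L of (A, B, C) \<Rightarrow> case P of (p, q, r) \<Rightarrow>
      of_int r / of_int q = (of_int A * (of_int p / of_int q) + of_int C) / (of_int B :: real))"

definition Hn :: "real \<Rightarrow> real \<Rightarrow> real \<Rightarrow> nat \<Rightarrow> real" where
  "Hn c l R n = 4 * c * inverse l * R ^ n"

definition Bof :: "int \<times> int \<times> int \<Rightarrow> int" where "Bof L = fst (snd L)"
definition qof :: "int \<times> int \<times> int \<Rightarrow> int" where "qof P = fst (snd P)"

definition Cn :: "real \<Rightarrow> real \<Rightarrow> real \<Rightarrow> real \<Rightarrow> real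
    \<Rightarrow> (int \<times> int \<times> int \<Rightarrow> int \<times> int \<times> int) \<Rightarrow> nat \<Rightarrow> (int \<times> int \<times> int) set" where
  "Cn s \<theta> c l R Lf n = {P \<in> Ccal s \<theta> c.
      Hn c l R n \<le> of_int (qof P * Bof (Lf P)) \<and> of_int (qof P * Bof (Lf P)) < Hn c l R (n + 1)}"

definition Cnk :: "real \<Rightarrow> real \<Rightarrow> real \<Rightarrow> real \<Rightarrow> real \<Rightarrow> real
    \<Rightarrow> (int \<times> int \<times> int \<Rightarrow> int \<times> int \<times> int) \<Rightarrow> nat \<Rightarrow> nat \<Rightarrow> (int \<times> int \<times> int) set" where
  "Cnk s t \<theta> c l R Lf n k =
     (let H = Hn c l R (n + 1) powr (t / (1 + t)); lam = 3 / t^2; \<mu> = 1 / (t * (1 + t)) in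
      if k = 1 then
        {P \<in> Cn s \<theta> c l R Lf n. H * R powr (-lam) \<le> of_int (Bof (Lf P)) \<and> of_int (Bof (Lf P)) < H}
      else
        {P \<in> Cn s \<theta> c l R Lf n. H * R powr (-lam - (real k - 1) * \<mu>) \<le> of_int (Bof (Lf P)) \<and>
            of_int (Bof (Lf P)) < H * R powr (-lam - (real k - 2) * \<mu>)})"

text \<open>The m-regular rooted tree: vertices are lists over {0..<m}, root [], height = length,
  successors of v are v @ [i] (i < m), and v' is an ancestor of v iff v' is a prefix of v.\<close>
definition tree_verts :: "nat \<Rightarrow> nat list set" where
  "tree_verts m = {v. \<forall>x\<in>set v. x < m}"

primrec Sset :: "nat \<Rightarrow> (nat \<Rightarrow> real set) \<Rightarrow> (nat list \<Rightarrow> real set) \<Rightarrow> nat \<Rightarrow> nat list set" where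
  "Sset m U I 0 = {[]}"
| "Sset m U I (Suc n) = {v @ [i] | v i. v \<in> Sset m U I n \<and> i < m \<and> I (v @ [i]) \<inter> U (Suc n) = {}}"

end

theory Submission
  imports Defs
begin

lemma norm_eq:
  fixes a b c a' b' c' :: int
  assumes "0 < b" "0 < b'" "gcd (gcd a b) c = 1" "gcd (gcd a' b') c' = 1"
    "a * b' = a' * b" "c * b' = c' * b"
  shows "a = a' \<and> b = b' \<and> c = c'"
proof -
  have "gcd (gcd (b' * a) (b' * b)) (b' * c) = b'"
    using assms by (simp add: gcd_mult_left abs_of_pos gcd_mult_distrib_int[symmetric])
  moreover have "gcd (gcd (b * a') (b * b')) (b * c') = b"
    using assms by (simp add: gcd_mult_left abs_of_pos gcd_mult_distrib_int[symmetric])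
  ultimately have "b = b'" using assms by (simp add: mult.commute)
  thus ?thesis using assms by auto
qed

lemma reduce_point:
  fixes X a Y :: int
  assumes "a \<noteq> 0"
  obtains p q r where "q > 0" "gcd (gcd p q) r = 1" "q \<le> \<bar>a\<bar>"
    "real_of_int p / real_of_int q = X / a" "real_of_int r / real_of_int q = Y / a"
proof -
  define g where "g = gcd (gcd X a) Y"
  have g0: "g > 0" using assms by (simp add: g_def)
  have "g dvd X" unfolding g_def by (rule dvd_trans[OF gcd_dvd1 gcd_dvd1])
  then obtain X1 where X1: "X = g * X1" by (elim dvdE)
  have "g dvd a" unfolding g_def by (rule dvd_trans[OF gcd_dvd1 gcd_dvd2])
  then obtain a1 where a1: "a = g * a1" by (elim dvdE)
  have "g dvd Y" unfolding g_def by simp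
  then obtain Y1 where Y1: "Y = g * Y1" by (elim dvdE)
  have "g * gcd (gcd X1 a1) Y1 = gcd (gcd (g*X1) (g*a1)) (g*Y1)"
    using g0 by (simp add: gcd_mult_distrib_int[symmetric])
  also have "\<dots> = gcd (gcd X a) Y" by (simp only: X1[symmetric] a1[symmetric] Y1[symmetric])
  finally have "g = g * gcd (gcd X1 a1) Y1" by (simp add: g_def)
  hence gg: "gcd (gcd X1 a1) Y1 = 1" using g0 by simp
  have a10: "a1 \<noteq> 0" using assms a1 by auto
  define sg where "sg = sgn a1"
  have sg: "sg * sg = 1" "sg * a1 = \<bar>a1\<bar>" using a10 by (auto simp: sg_def sgn_if)
  show ?thesis
  proof (rule that[of "sg * a1" "sg * X1" "sg * Y1"])
    show "sg * a1 > 0" using sg a10 by simp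
    have "sg = 1 \<or> sg = -1" using a10 by (auto simp: sg_def sgn_if)
    thus "gcd (gcd (sg * X1) (sg * a1)) (sg * Y1) = 1" using gg by auto
    show "sg * a1 \<le> \<bar>a\<bar>" using sg g0 a1 by (simp add: abs_mult) (smt (verit) mult_le_cancel_right1 abs_ge_zero)
    have gr: "real_of_int g \<noteq> 0" using g0 by simp
    have sr: "real_of_int sg \<noteq> 0" using sg by auto
    show "real_of_int (sg * X1) / real_of_int (sg * a1) = X / a"
      using gr sr by (simp add: X1 a1)
    show "real_of_int (sg * Y1) / real_of_int (sg * a1) = Y / a"
      using gr sr by (simp add: Y1 a1)
  qed
qed

lemma near_f:
  fixes q B A C p r y \<theta> c s t :: real
  assumes q: "q > 0" and B: "B > 0" and c: "c > 0"
    and hx: "\<bar>\<theta> - p/q\<bar> < c / q powr (1+s)"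
    and hl: "r/q = (A*(p/q)+C)/B" and hA: "\<bar>A\<bar> \<le> q powr s" and hB: "B \<le> q powr t"
    and hy: "\<bar>y - r/q\<bar> < c / q powr (1+t)"
  shows "\<bar>y - (A*\<theta>+C)/B\<bar> < 2*c/(q*B)"
proof -
  have e1: "q powr (1+s) = q * q powr s" using q by (simp add: powr_add)
  have e2: "q powr (1+t) = q * q powr t" using q by (simp add: powr_add)
  have qs: "q powr s > 0" "q powr t > 0" using q by auto
  have "(A*\<theta>+C)/B - r/q = A*(\<theta> - p/q)/B" using hl B by (simp add: field_simps)
  moreover have "\<bar>A*(\<theta> - p/q)\<bar> \<le> q powr s * (c / (q * q powr s))"
    unfolding abs_mult using hA hx e1 by (intro mult_mono) auto
  moreover have "q powr s * (c / (q * q powr s)) = c / q" using qs q by (simp add: field_simps)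
  ultimately have a1: "\<bar>(A*\<theta>+C)/B - r/q\<bar> \<le> c/(q*B)" using B q
    by (simp add: abs_div divide_right_mono) (metis abs_of_pos divide_divide_eq_left divide_right_mono order_less_imp_le)
  have "c / q powr (1+t) \<le> c/(q*B)" unfolding e2 using c q B hB qs
    by (intro divide_left_mono) (auto intro: mult_left_mono)
  moreover have "2*c/(q*B) = c/(q*B) + c/(q*B)" by (simp add: field_simps)
  ultimately show ?thesis using hy a1 by (smt (verit))
qed

lemma abs5: "\<bar>(x1::real) - x2 - x3 + x4 + x5\<bar> \<le> \<bar>x1\<bar> + \<bar>x2\<bar> + \<bar>x3\<bar> + \<bar>x4\<bar> + \<bar>x5\<bar>"
  by linarith

lemma k1_core:
  fixes q B A C p r y q' p' r' y' \<theta> c s t R H La :: real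
  assumes q: "q > 0" and B: "B > 0" and c: "c > 0" and q': "q' > 0" and B': "B' > 0"
    and st: "s > 0" "t > 0" "s + t = 1"
    and hx: "\<bar>\<theta> - p/q\<bar> < c / q powr (1+s)"
    and hx': "\<bar>\<theta> - p'/q'\<bar> < c / q' powr (1+s)"
    and hl: "r/q = (A*(p/q)+C)/B" and hA: "\<bar>A\<bar> \<le> q powr s" and hB: "B \<le> q powr t"
    and hB': "B' \<le> q' powr t"
    and hy: "\<bar>y - r/q\<bar> < c / q powr (1+t)"
    and hy': "\<bar>y' - r'/q'\<bar> < c / q' powr (1+t)"
    and hyy: "\<bar>y - y'\<bar> \<le> 4*c*R^2/H"
    and R: "R \<ge> 16" and H: "H > 0"
    and qB: "H/R \<le> q*B" "q*B < H" and qB': "H/R \<le> q'*B'" "q'*B' < H"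
    and La: "La \<ge> 1" "8*c*R^2*La \<le> 1" "B < B'*La" "B' < B*La"
  shows "\<bar>A*p' + C*q' - B*r'\<bar> < 1"
proof -
  define u where "u = \<theta> - p/q"
  define u2 where "u2 = \<theta> - p'/q'"
  define v where "v = y - r/q"
  define v2 where "v2 = y' - r'/q'"
  define d where "d = y - y'"
  have z: "B*r/q - A*p/q - C = 0" using hl q B by (simp add: field_simps)
  have E0: "A*p' + C*q' - B*r' = q' * (A*(u - u2) - B*(v - v2 - d)) - q'*(B*r/q - A*p/q - C)"
    using q q' unfolding u_def u2_def v_def v2_def d_def by (simp add: field_simps)
  have E: "A*p' + C*q' - B*r' = q' * (A*(u - u2) - B*(v - v2 - d))" using E0 z by simp
  have "\<bar>q' * (A*(u - u2) - B*(v - v2 - d))\<bar> \<le>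
      q'*\<bar>A\<bar>*\<bar>u\<bar> + q'*\<bar>A\<bar>*\<bar>u2\<bar> + q'*B*\<bar>v\<bar> + q'*B*\<bar>v2\<bar> + q'*B*\<bar>d\<bar>"
  proof -
    have "\<bar>q' * (A*(u - u2) - B*(v - v2 - d))\<bar> = q' * abs (A*u - A*u2 - B* v + B* v2 + B*d)"
      using q' by (subst abs_mult, simp add: algebra_simps)
    also have "abs (A*u - A*u2 - B* v + B* v2 + B*d) \<le> \<bar>A\<bar>*\<bar>u\<bar> + \<bar>A\<bar>*\<bar>u2\<bar> + B*\<bar>v\<bar> + B*\<bar>v2\<bar> + B*\<bar>d\<bar>"
    proof -
      have "abs (A*u - A*u2 - B* v + B* v2 + B*d) \<le> abs (A*u) + abs (A*u2) + abs (B* v) + abs (B* v2) + abs (B*d)"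
        by (rule abs5)
      also have "\<dots> = \<bar>A\<bar>*\<bar>u\<bar> + \<bar>A\<bar>*\<bar>u2\<bar> + B*\<bar>v\<bar> + B*\<bar>v2\<bar> + B*\<bar>d\<bar>"
        using B by (simp add: abs_mult)
      finally show ?thesis .
    qed
    finally show ?thesis using q' by (simp add: algebra_simps mult_left_mono)
  qed
  have RL: "R*La \<ge> 1" using R La by (smt (verit) mult_le_cancel_left1)
  have qq1: "q' \<le> R*La*q"
  proof -
    have "q'*B' < R*(q*B)" using qB qB' R by (simp add: divide_le_eq mult.commute)
    also have "R*(q*B) \<le> R*La*q*B'" using La q R by (simp add: mult_left_mono mult.commute mult.left_commute)
    finally show ?thesis using B' by (simp add: mult.commute)
  qed
  have qq2: "q \<le> R*La*q'"
  proof -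
    have "q*B < R*(q'*B')" using qB qB' R by (simp add: divide_le_eq mult.commute)
    also have "R*(q'*B') \<le> R*La*q'*B" using La q' R by (simp add: mult_left_mono mult.commute mult.left_commute)
    finally show ?thesis using B by (simp add: mult.commute)
  qed
  have qs: "q powr s > 0" "q powr t > 0" "q' powr s > 0" "q' powr t > 0" using q q' by auto
  have t1: "q'*\<bar>A\<bar>*\<bar>u\<bar> \<le> c*R*La"
  proof -
    have "q'*\<bar>A\<bar>*\<bar>u\<bar> \<le> q'*(q powr s)*(c/(q*q powr s))"
      using hx hA q' unfolding u_def using q by (intro mult_mono) (auto simp: powr_add)
    also have "\<dots> = c*(q'/q)" using qs q by (simp add: field_simps)
    also have "\<dots> \<le> c*R*La" using qq1 q c by (simp add: divide_le_eq mult.commute mult.left_commute)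
    finally show ?thesis .
  qed
  have t2: "q'*\<bar>A\<bar>*\<bar>u2\<bar> \<le> c*R*La"
  proof -
    have "q'*\<bar>A\<bar>*\<bar>u2\<bar> \<le> q'*(q powr s)*(c/(q'*q' powr s))"
      using hx' hA q' unfolding u2_def using q by (intro mult_mono) (auto simp: powr_add)
    also have "\<dots> = c*((q/q') powr s)" using qs q q' by (simp add: field_simps powr_divide)
    also have "(q/q') powr s \<le> R*La"
    proof (cases "q/q' \<le> 1")
      case True
      then have "(q/q') powr s \<le> 1" using st q q' by (simp add: powr_le1)
      then show ?thesis using RL by linarith
    next
      case False
      then have "(q/q') powr s \<le> (q/q') powr 1" using st by (intro powr_mono) auto
      also have "\<dots> \<le> R*La" using qq2 q' q by (simp add: divide_le_eq)
      finally show ?thesis .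
    qed
    hence "c*((q/q') powr s) \<le> c*(R*La)" using c by simp
    finally show ?thesis by simp
  qed
  have t3: "q'*B*\<bar>v\<bar> \<le> c*R*La"
  proof -
    have "q'*B*\<bar>v\<bar> \<le> q'*B*(c/(q*B))"
    proof -
      have "c / q powr (1+t) \<le> c/(q*B)" using q B c hB qs
        by (simp add: powr_add) (intro divide_left_mono, auto intro: mult_left_mono)
      then show ?thesis using hy q' B unfolding v_def by (intro mult_left_mono) auto
    qed
    also have "\<dots> = c*(q'/q)" using q B by (simp add: field_simps)
    also have "\<dots> \<le> c*R*La" using qq1 q c by (simp add: divide_le_eq mult.commute mult.left_commute)
    finally show ?thesis .
  qed
  have t4: "q'*B*\<bar>v2\<bar> \<le> c*La"
  proof -
    have "q'*B*\<bar>v2\<bar> \<le> q'*B*(c/(q'*B'))"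
    proof -
      have "c / q' powr (1+t) \<le> c/(q'*B')" using q' B' c hB' qs
        by (simp add: powr_add) (intro divide_left_mono, auto intro: mult_left_mono)
      then show ?thesis using hy' q' B unfolding v2_def by (intro mult_left_mono) auto
    qed
    also have "\<dots> = c*(B/B')" using q' B' by (simp add: field_simps)
    also have "\<dots> \<le> c*La" using La B' c by (simp add: divide_le_eq mult.commute)
    finally show ?thesis .
  qed
  have t5: "q'*B*\<bar>d\<bar> \<le> 4*c*R^2*La"
  proof -
    have "q'*B*\<bar>d\<bar> \<le> q'*B*(4*c*R^2/H)" using hyy q' B unfolding d_def by (intro mult_left_mono) auto
    also have "q'*B \<le> H*La"
    proof -
      have "q'*B \<le> q'*(B'*La)" using La q' by (intro mult_left_mono) auto
      also have "\<dots> \<le> H*La" using qB' La by (simp add: mult.assoc[symmetric])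
      finally show ?thesis .
    qed
    hence "q'*B*(4*c*R^2/H) \<le> H*La*(4*c*R^2/H)" using c H by (intro mult_right_mono) auto
    also have "\<dots> = 4*c*R^2*La" using H by simp
    finally show ?thesis by simp
  qed
  have R2: "R^2 \<ge> 256" using R power_mono[of 16 R 2] by simp
  have R3: "16*R \<le> R^2" using R by (simp add: power2_eq_square)
  have cLa: "c*La \<ge> 0" using c La by simp
  have f1: "c*R*La*16 \<le> c*R^2*La"
    using mult_left_mono[OF R3 cLa] by (simp add: algebra_simps)
  have f2: "c*La*256 \<le> c*R^2*La"
    using mult_left_mono[OF R2 cLa] by (simp add: algebra_simps)
  have "\<bar>A*p' + C*q' - B*r'\<bar> \<le>
      q'*\<bar>A\<bar>*\<bar>u\<bar> + q'*\<bar>A\<bar>*\<bar>u2\<bar> + q'*B*\<bar>v\<bar> + q'*B*\<bar>v2\<bar> + q'*B*\<bar>d\<bar>"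
    using E \<open>\<bar>q' * _\<bar> \<le> _\<close> by simp
  hence "\<bar>A*p' + C*q' - B*r'\<bar> \<le> c*R^2*La * (3/16 + 1/256 + 4)"
    using t1 t2 t3 t4 t5 f1 f2 by (simp add: algebra_simps)
  also have "\<dots> < 1" using La by simp
  finally show ?thesis .
qed

lemma powr_le_1_neg:
  fixes R e :: real
  assumes "1 \<le> R" "e \<le> 0"
  shows "R powr e \<le> 1"
proof -
  have "R powr e \<le> R powr 0" using assms by (intro powr_mono) auto
  thus ?thesis using assms by simp
qed

lemma ident1:
  fixes G R s t w \<mu> :: real
  assumes G: "G > 0" and R: "R > 0" and st: "s + t = 1"
  shows "((G powr (1+t)) / (G powr t * R powr (-w-\<mu>))) powr s * (G powr t * R powr (-w))
         = G * R powr (s*\<mu> - t*w)"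
proof -
  have "G powr (1+t) / (G powr t * R powr (-w-\<mu>)) = G * R powr (w+\<mu>)"
  proof -
    have rr: "R powr \<mu> * (R powr w * R powr (-w-\<mu>)) = 1"
      using R by (simp add: powr_add[symmetric])
    show ?thesis using G R rr by (simp add: powr_add powr_minus field_simps)
  qed
  hence "((G powr (1+t)) / (G powr t * R powr (-w-\<mu>))) powr s = G powr s * R powr (s*(w+\<mu>))"
    using G R by (simp add: powr_mult powr_powr mult.commute)
  hence "((G powr (1+t)) / (G powr t * R powr (-w-\<mu>))) powr s * (G powr t * R powr (-w))
      = (G powr s * G powr t) * (R powr (s*(w+\<mu>)) * R powr (-w))" by (simp add: algebra_simps)
  also have "G powr s * G powr t = G" using G st by (simp add: powr_add[symmetric])
  also have "R powr (s*(w+\<mu>)) * R powr (-w) = R powr (s*\<mu> - t*w)"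
  proof -
    have "s*(w+\<mu>) + (-w) = s*\<mu> - t*w" proof -
      have "s*w + t*w = w" using st by (metis distrib_right mult_1)
      thus ?thesis by (simp add: algebra_simps)
    qed
    thus ?thesis by (simp only: powr_add[symmetric])
  qed
  finally show ?thesis .
qed

lemma kge2_core:
  fixes q B A C y q' B' A' C' y' \<theta> c s t R H G w \<mu> K :: real
  assumes q: "q > 0" and B: "B > 0" and q': "q' > 0" and B': "B' > 0" and c: "c > 0"
    and st: "s > 0" "t > 0" "s + t = 1"
    and hf: "\<bar>y - (A*\<theta>+C)/B\<bar> < 2*c/(q*B)"
    and hf': "\<bar>y' - (A'*\<theta>+C')/B'\<bar> < 2*c/(q'*B')"
    and hA: "\<bar>A\<bar> \<le> q powr s" and hA': "\<bar>A'\<bar> \<le> q' powr s"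
    and hyy: "\<bar>y - y'\<bar> \<le> 4*c*R powr (K+1)/H"
    and R: "R \<ge> 16" and G: "G \<ge> 1" and H: "H = G powr (1+t)" and K: "K \<ge> 0"
    and qB: "H/R \<le> q*B" "q*B < H" and qB': "H/R \<le> q'*B'" "q'*B' < H"
    and Bb: "G powr t * R powr (-w-\<mu>) \<le> B" "B < G powr t * R powr (-w)"
    and Bb': "G powr t * R powr (-w-\<mu>) \<le> B'" "B' < G powr t * R powr (-w)"
    and ex1: "(1+t)*(s*\<mu> - t*w) \<le> -K - 4" and ex2: "2*w \<ge> K + 4"
    and c8: "8*c*R^2 \<le> 1"
  shows "\<bar>(A*B'-A'*B)*\<theta> + (C*B'-C'*B)\<bar> < 1"
    and "A*B'-A'*B \<noteq> 0 \<Longrightarrow>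
       \<bar>\<theta> + (C*B'-C'*B)/(A*B'-A'*B)\<bar> < c / \<bar>A*B'-A'*B\<bar> powr (1+s) \<and>
       \<bar>y - (A*C'-A'*C)/(A*B'-A'*B)\<bar> < c / \<bar>A*B'-A'*B\<bar> powr (1+t) \<and>
       \<bar>A*B'-A'*B\<bar> powr (1+t) < H * R powr (-K)"
proof -
  define a where "a = A*B'-A'*B"
  define b where "b = C*B'-C'*B"
  define e where "e = A*C'-A'*C"
  define f where "f = (A*\<theta>+C)/B"
  define f' where "f' = (A'*\<theta>+C')/B'"
  have R0: "R > 0" "R > 1" using R by auto
  have G0: "G > 0" using G by auto
  have H0: "H > 0" using H G0 by simp
  have RK: "R powr (K+1) \<ge> R" using R0 K powr_mono[of 1 "K+1" R] by simp
  have d1: "2*c/(q*B) \<le> 2*c*R/H"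
  proof -
    have "2*c/(q*B) \<le> 2*c/(H/R)" using qB H0 R0 c q B by (intro divide_left_mono) auto
    thus ?thesis by simp
  qed
  have d1': "2*c/(q'*B') \<le> 2*c*R/H"
  proof -
    have "2*c/(q'*B') \<le> 2*c/(H/R)" using qB' H0 R0 c q' B' by (intro divide_left_mono) auto
    thus ?thesis by simp
  qed
  have "c*R/H \<le> c*R powr (K+1)/H" using RK c H0 by (simp add: divide_right_mono)
  hence hff: "\<bar>f - f'\<bar> < 8*c*R powr (K+1)/H"
  proof -
    assume cr: "c*R/H \<le> c*R powr (K+1)/H"
    have tri: "\<bar>f - f'\<bar> \<le> \<bar>y - f\<bar> + \<bar>y - y'\<bar> + \<bar>y' - f'\<bar>" by linarith
    have e1: "2*c*R/H = 2*(c*R/H)" "4*c*R powr (K+1)/H = 4*(c*R powr (K+1)/H)"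
      "8*c*R powr (K+1)/H = 8*(c*R powr (K+1)/H)" by simp_all
    show ?thesis using tri hf hf' d1 d1' hyy cr e1 unfolding f_def f'_def by linarith
  qed
  have fd: "f - f' = (a*\<theta>+b)/(B*B')" unfolding f_def f'_def a_def b_def using B B'
    by (simp add: field_simps)
  have main1: "\<bar>a*\<theta>+b\<bar> < 8*c*R powr (K+1)*(B*B')/H"
  proof -
    have "\<bar>a*\<theta>+b\<bar> = \<bar>f - f'\<bar> * (B*B')" using fd B B' by (simp add: abs_mult)
    also have "\<dots> < 8*c*R powr (K+1)/H * (B*B')" using hff B B' by (intro mult_strict_right_mono) auto
    finally show ?thesis by simp
  qed
  have BB: "B*B' < H * R powr (-2*w)"
  proof -
    have "B*B' < (G powr t * R powr (-w)) * (G powr t * R powr (-w))"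
      using Bb Bb' B B' by (intro mult_strict_mono) auto
    also have "\<dots> = G powr (2*t) * R powr (-2*w)"
      by (simp add: powr_add[symmetric] algebra_simps)
    also have "G powr (2*t) \<le> H" unfolding H using G st by (intro powr_mono) auto
    hence "G powr (2*t) * R powr (-2*w) \<le> H * R powr (-2*w)" by (intro mult_right_mono) auto
    finally show ?thesis .
  qed
  have c8': "8*c \<le> R powr (-2)"
    using c8 R0 by (simp add: powr_minus powr_realpow field_simps)
  show "\<bar>(A*B'-A'*B)*\<theta> + (C*B'-C'*B)\<bar> < 1"
  proof -
    have "8*c*R powr (K+1)*(B*B') \<le> R powr (-2) * R powr (K+1) * (B*B')"
      using c8' B B' by (simp add: mult_right_mono)
    also have "\<dots> \<le> R powr (K - 1) * (H * R powr (-2*w))"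
    proof -
      have e: "R powr (-2) * R powr (K+1) = R powr (K-1)" by (simp add: powr_add[symmetric])
      have "R powr (K-1) * (B*B') \<le> R powr (K - 1) * (H * R powr (-2*w))"
        using BB by (intro mult_left_mono) auto
      thus ?thesis using e by simp
    qed
    also have "\<dots> = H * R powr (K - 1 - 2*w)" by (simp add: powr_add[symmetric] algebra_simps)
    also have "R powr (K - 1 - 2*w) \<le> R powr 0" using ex2 R0 by (intro powr_mono) auto
    hence "R powr (K - 1 - 2*w) \<le> 1" using R0 by simp
    hence "H * R powr (K - 1 - 2*w) \<le> H * 1" using H0 by (intro mult_left_mono) auto
    finally have "8*c*R powr (K+1)*(B*B')/H \<le> 1" using H0 by simp
    thus ?thesis using main1 unfolding a_def b_def by simp
  qed
  assume a0: "A*B'-A'*B \<noteq> 0"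
  hence aa: "\<bar>a\<bar> > 0" unfolding a_def by simp
  define \<rho> where "\<rho> = R powr (s*\<mu> - t*w)"
  have sm: "s*\<mu> - t*w < 0"
  proof -
    have "(1+t)*(s*\<mu> - t*w) < 0" using ex1 K by linarith
    thus ?thesis using st by (simp add: mult_less_0_iff)
  qed
  have \<rho>: "\<rho> > 0" "\<rho> \<le> 1" unfolding \<rho>_def using R0 sm by (auto intro!: powr_le_1_neg)
  have \<rho>t: "\<rho> powr (1+t) \<le> R powr (-K-4)"
    unfolding \<rho>_def using R0 ex1 by (simp add: powr_powr mult.commute)
  have AB: "\<bar>A\<bar>*B' < G*\<rho>"
  proof -
    let ?Lw = "G powr t * R powr (-w-\<mu>)"
    have Lw: "?Lw > 0" using G0 R0 by simp
    have "q*?Lw \<le> q*B" using Bb q by (intro mult_left_mono) auto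
    hence "q*?Lw < H" using qB by simp
    hence "q < H/?Lw" using Lw by (simp add: less_divide_eq)
    hence "q powr s < (H/?Lw) powr s" using q st by (intro powr_less_mono2) auto
    hence "\<bar>A\<bar>*B' \<le> (H/?Lw) powr s * B'" using hA B' by (intro mult_right_mono) auto
    also have "\<dots> < (H/?Lw) powr s * (G powr t * R powr (-w))" using Bb' H0 Lw by (intro mult_strict_left_mono) auto
    also have "\<dots> = G*\<rho>" unfolding \<rho>_def H using ident1 G0 R0 st by simp
    finally show ?thesis .
  qed
  have AB': "\<bar>A'\<bar>*B < G*\<rho>"
  proof -
    let ?Lw = "G powr t * R powr (-w-\<mu>)"
    have Lw: "?Lw > 0" using G0 R0 by simp
    have "q'*?Lw \<le> q'*B'" using Bb' q' by (intro mult_left_mono) auto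
    hence "q'*?Lw < H" using qB' by simp
    hence "q' < H/?Lw" using Lw by (simp add: less_divide_eq)
    hence "q' powr s < (H/?Lw) powr s" using q' st by (intro powr_less_mono2) auto
    hence "\<bar>A'\<bar>*B \<le> (H/?Lw) powr s * B" using hA' B by (intro mult_right_mono) auto
    also have "\<dots> < (H/?Lw) powr s * (G powr t * R powr (-w))" using Bb H0 Lw by (intro mult_strict_left_mono) auto
    also have "\<dots> = G*\<rho>" unfolding \<rho>_def H using ident1 G0 R0 st by simp
    finally show ?thesis .
  qed
  have absa: "\<bar>a\<bar> < 2*G*\<rho>"
  proof -
    have "\<bar>a\<bar> \<le> \<bar>A\<bar>*B' + \<bar>A'\<bar>*B" unfolding a_def using B B'
      by (metis abs_mult abs_of_pos abs_triangle_ineq4)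
    thus ?thesis using AB AB' by linarith
  qed
  have absa2: "\<bar>a\<bar> < 2*G" using absa \<rho> G0 by (smt (verit) mult_left_le)
  have Rk4: "R powr (-K-4) = R powr (-K) * R powr (-4)" by (simp add: powr_add[symmetric])
  have R4: "R powr (-4) \<le> 1/65536"
  proof -
    have "R powr (-4) = 1/R^4" using R0 by (simp add: powr_minus powr_realpow divide_inverse)
    moreover have "16^4 \<le> R^4" using R by (intro power_mono) auto
    moreover have "R^4 > 0" using R0 by simp
    ultimately show ?thesis by (simp add: frac_le)
  qed
  have RK0: "R powr (-K) \<le> 1" using R0 K by (intro powr_le_1_neg) auto
  have RKpos: "R powr (-K) > 0" using R0 by simp
  have Pa: "\<bar>a\<bar> powr (1+t) < 4*H*R powr (-K-4)"
  proof -
    have "\<bar>a\<bar> powr (1+t) < (2*G*\<rho>) powr (1+t)" using absa st by (intro powr_less_mono2) auto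
    also have "\<dots> = 2 powr (1+t) * H * \<rho> powr (1+t)" unfolding H using G0 \<rho>
      by (simp add: powr_mult)
    also have "\<dots> \<le> 4 * H * R powr (-K-4)"
    proof -
      have "2 powr (1+t) \<le> 2 powr (2::real)" using st by (intro powr_mono) auto
      hence "2 powr (1+t) \<le> 4" by simp
      thus ?thesis using \<rho>t H0 by (intro mult_mono) auto
    qed
    finally show ?thesis .
  qed
  have O3c: "\<bar>a\<bar> powr (1+t) < H * R powr (-K)"
  proof -
    have "4*H*R powr (-K-4) = H * R powr (-K) * (4 * R powr (-4))" using Rk4 by simp
    also have "\<dots> \<le> H * R powr (-K) * 1" using R4 H0 RKpos by (intro mult_left_mono) auto
    finally show ?thesis using Pa by simp
  qed
  have R3: "R powr (-3) \<le> 1/4096"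
  proof -
    have "R powr (-3) = 1/R^3" using R0 by (simp add: powr_minus powr_realpow divide_inverse)
    moreover have "16^3 \<le> R^3" using R by (intro power_mono) auto
    moreover have "R^3 > 0" using R0 by simp
    ultimately show ?thesis by (simp add: frac_le)
  qed
  have R3pos: "R powr (-3) > 0" using R0 by simp
  have RKp: "R powr (K+1) > 0" using R0 by simp
  have aspos: "\<bar>a\<bar> powr s > 0" "\<bar>a\<bar> powr t > 0" using aa by auto
  have BBG: "B*B' < G powr (2*t) * R powr (-2*w)"
  proof -
    have "B*B' < (G powr t * R powr (-w)) * (G powr t * R powr (-w))"
      using Bb Bb' B B' by (intro mult_strict_mono) auto
    also have "\<dots> = G powr (2*t) * R powr (-2*w)"
      by (simp add: powr_add[symmetric] algebra_simps)
    finally show ?thesis .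
  qed
  have X1: "8*R powr (K+1)*(B*B')*\<bar>a\<bar> powr s \<le> H"
  proof -
    have as: "\<bar>a\<bar> powr s \<le> 2 * G powr s"
    proof -
      have "\<bar>a\<bar> powr s \<le> (2*G) powr s" using absa2 st by (intro powr_mono2) auto
      also have "\<dots> = 2 powr s * G powr s" using G0 by (simp add: powr_mult)
      also have "2 powr s \<le> 2 powr (1::real)" using st by (intro powr_mono) auto
      hence "2 powr s * G powr s \<le> 2 * G powr s" using G0 by (intro mult_right_mono) auto
      finally show ?thesis .
    qed
    have "(B*B')*\<bar>a\<bar> powr s \<le> (G powr (2*t) * R powr (-2*w)) * (2 * G powr s)"
      using BBG as B B' aspos G0 R0 by (metis less_imp_le mult_mono mult_nonneg_nonneg powr_ge_zero)
    also have "\<dots> = 2 * H * R powr (-2*w)"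
    proof -
      have "2*t + s = 1 + t" using st by simp
      hence "G powr (2*t) * G powr s = G powr (1+t)" by (simp only: powr_add[symmetric])
      thus ?thesis unfolding H by (simp add: algebra_simps)
    qed
    finally have "8*R powr (K+1)*((B*B')*\<bar>a\<bar> powr s) \<le> 8*R powr (K+1)*(2 * H * R powr (-2*w))"
      using RKp by (intro mult_left_mono) auto
    also have "\<dots> = 16 * H * R powr (K+1-2*w)" by (simp add: powr_add[symmetric] algebra_simps)
    also have "R powr (K+1-2*w) \<le> R powr (-3)" using ex2 R0 by (intro powr_mono) auto
    hence "16 * H * R powr (K+1-2*w) \<le> 16 * H * (1/4096)" using R3 H0 by (intro mult_left_mono) auto
    finally show ?thesis using H0 by (simp add: algebra_simps)
  qed
  have X2: "16*R powr (K+1)*(\<bar>A\<bar>*B')*\<bar>a\<bar> powr t \<le> H"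
  proof -
    have at: "\<bar>a\<bar> powr t \<le> 2 * G powr t * \<rho> powr t"
    proof -
      have "\<bar>a\<bar> powr t \<le> (2*G*\<rho>) powr t" using absa st by (intro powr_mono2) auto
      also have "\<dots> = 2 powr t * G powr t * \<rho> powr t" using G0 \<rho> by (simp add: powr_mult)
      also have "2 powr t \<le> 2 powr (1::real)" using st by (intro powr_mono) auto
      hence "2 powr t * G powr t * \<rho> powr t \<le> 2 * G powr t * \<rho> powr t" using G0 \<rho> by (intro mult_right_mono) auto
      finally show ?thesis .
    qed
    have "(\<bar>A\<bar>*B')*\<bar>a\<bar> powr t \<le> (G*\<rho>) * (2 * G powr t * \<rho> powr t)"
    proof (rule mult_mono)
      show "\<bar>A\<bar>*B' \<le> G*\<rho>" using AB by simp
      show "\<bar>a\<bar> powr t \<le> 2 * G powr t * \<rho> powr t" by (rule at)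
      show "0 \<le> G*\<rho>" using G0 \<rho> by simp
      show "0 \<le> \<bar>a\<bar> powr t" by simp
    qed
    also have "\<dots> = 2 * H * \<rho> powr (1+t)"
    proof -
      have "G * G powr t = G powr (1+t)" using G0 by (simp add: powr_add)
      moreover have "\<rho> * \<rho> powr t = \<rho> powr (1+t)" using \<rho> by (simp add: powr_add)
      ultimately show ?thesis unfolding H by (metis mult.assoc mult.commute mult.left_commute)
    qed
    also have "\<dots> \<le> 2 * H * R powr (-K-4)" using \<rho>t H0 by simp
    finally have "16*R powr (K+1)*((\<bar>A\<bar>*B')*\<bar>a\<bar> powr t) \<le> 16*R powr (K+1)*(2 * H * R powr (-K-4))"
      using RKp by (intro mult_left_mono) auto
    also have "\<dots> = 32 * H * R powr (-3)" by (simp add: powr_add[symmetric] algebra_simps)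
    also have "\<dots> \<le> 32 * H * (1/4096)" using R3 H0 by (intro mult_left_mono) auto
    finally show ?thesis using H0 by (simp add: algebra_simps)
  qed
  have X3: "4*R*\<bar>a\<bar> powr (1+t) \<le> H"
  proof -
    have "\<bar>a\<bar> powr (1+t) \<le> 4*H*R powr (-4)"
    proof -
      have "R powr (-K-4) \<le> R powr (-4)" using R0 K by (intro powr_mono) auto
      thus ?thesis using Pa H0 by (smt (verit) mult_left_mono)
    qed
    hence "4*R*\<bar>a\<bar> powr (1+t) \<le> 4*R*(4*H*R powr (-4))" using R0 by (intro mult_left_mono) auto
    also have "\<dots> = 16*H*(R * R powr (-4))" by (simp add: algebra_simps)
    also have "R * R powr (-4) = R powr (-3)" using R0 by (simp add: powr_add[symmetric] powr_mult_base)
    also have "16*H*R powr (-3) \<le> 16 * H * (1/4096)" using R3 H0 by (intro mult_left_mono) auto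
    finally show ?thesis using H0 by (simp add: algebra_simps)
  qed
  have ap1: "\<bar>a\<bar> powr (1+s) = \<bar>a\<bar> * \<bar>a\<bar> powr s" "\<bar>a\<bar> powr (1+t) = \<bar>a\<bar> * \<bar>a\<bar> powr t"
    using aa by (simp_all add: powr_add)
  have th: "\<theta> + b/a = (a*\<theta>+b)/a" using aa by (simp add: field_simps)
  have thb: "\<bar>\<theta> + b/a\<bar> < 8*c*R powr (K+1)*(B*B')/H / \<bar>a\<bar>"
    unfolding th abs_divide using divide_strict_right_mono[OF main1 aa] by simp
  have O3a: "\<bar>\<theta> + b/a\<bar> < c / \<bar>a\<bar> powr (1+s)"
  proof -
    have "8*c*R powr (K+1)*(B*B')/H / \<bar>a\<bar> \<le> c / \<bar>a\<bar> powr (1+s)"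
      unfolding ap1 using X1 aa aspos H0 c
      by (simp add: divide_simps, (smt (verit) mult.commute mult.left_commute mult_left_mono)?)
    thus ?thesis using thb by linarith
  qed
  have fe: "f - e/a = (A/B)*(\<theta> + b/a)" unfolding f_def e_def a_def b_def
    using aa B unfolding a_def by (simp add: field_simps)
  have O3b: "\<bar>y - e/a\<bar> < c / \<bar>a\<bar> powr (1+t)"
  proof -
    have apos: "\<bar>a\<bar> powr (1+t) > 0" using aa by simp
    have "\<bar>f - e/a\<bar> = \<bar>A\<bar>/B * \<bar>\<theta> + b/a\<bar>" using fe B by (simp add: abs_mult)
    also have "\<dots> \<le> \<bar>A\<bar>/B * (8*c*R powr (K+1)*(B*B')/H / \<bar>a\<bar>)"
      using thb B by (intro mult_left_mono) auto
    also have "\<dots> = 8*c*R powr (K+1)*(\<bar>A\<bar>*B')/(H*\<bar>a\<bar>)" using B by (simp add: field_simps)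
    also have "\<dots> \<le> c / (2 * \<bar>a\<bar> powr (1+t))"
      unfolding ap1 using X2 aa aspos H0 c
      by (simp add: divide_simps, (smt (verit) mult.commute mult.left_commute mult_left_mono)?)
    finally have t1: "\<bar>f - e/a\<bar> \<le> c / (2 * \<bar>a\<bar> powr (1+t))" .
    have "2*c*R/H \<le> c / (2 * \<bar>a\<bar> powr (1+t))"
      using X3 apos H0 c by (simp add: divide_simps, (smt (verit) mult.commute mult.left_commute mult_left_mono)?)
    hence t2: "\<bar>y - f\<bar> < c / (2 * \<bar>a\<bar> powr (1+t))" using hf d1 unfolding f_def by linarith
    have "c / (2 * \<bar>a\<bar> powr (1+t)) + c / (2 * \<bar>a\<bar> powr (1+t)) = c / \<bar>a\<bar> powr (1+t)" by simp
    thus ?thesis using t1 t2 by linarith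
  qed
  show "\<bar>\<theta> + (C*B'-C'*B)/(A*B'-A'*B)\<bar> < c / \<bar>A*B'-A'*B\<bar> powr (1+s) \<and>
       \<bar>y - (A*C'-A'*C)/(A*B'-A'*B)\<bar> < c / \<bar>A*B'-A'*B\<bar> powr (1+t) \<and>
       \<bar>A*B'-A'*B\<bar> powr (1+t) < H * R powr (-K)"
    using O3a O3b O3c unfolding a_def b_def e_def by simp
qed

lemma Sset_props:
  assumes I_mono: "\<forall>v \<in> tree_verts m. \<forall>w. v @ w \<in> tree_verts m \<longrightarrow> I (v @ w) \<subseteq> I v"
  shows "\<tau> \<in> Sset m U I N \<Longrightarrow> \<tau> \<in> tree_verts m \<and> length \<tau> = N \<and>
           (\<forall>j. 1 \<le> j \<and> j \<le> N \<longrightarrow> I \<tau> \<inter> U j = {})"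
proof (induction N arbitrary: \<tau>)
  case 0
  then show ?case by (simp add: tree_verts_def)
next
  case (Suc N)
  then obtain v i where v: "\<tau> = v @ [i]" "v \<in> Sset m U I N" "i < m" "I (v @ [i]) \<inter> U (Suc N) = {}"
    by auto
  from Suc.IH[OF v(2)] have IH: "v \<in> tree_verts m" "length v = N"
    "\<forall>j. 1 \<le> j \<and> j \<le> N \<longrightarrow> I v \<inter> U j = {}" by auto
  have tv: "\<tau> \<in> tree_verts m" using IH(1) v(1,3) by (auto simp: tree_verts_def)
  have sub: "I \<tau> \<subseteq> I v" using I_mono IH(1) tv v(1) by blast
  show ?case
  proof (intro conjI allI impI)
    show "\<tau> \<in> tree_verts m" by (rule tv)
    show "length \<tau> = Suc N" using v(1) IH(2) by simp
    fix j assume j: "1 \<le> j \<and> j \<le> Suc N"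
    show "I \<tau> \<inter> U j = {}"
    proof (cases "j = Suc N")
      case True then show ?thesis using v by simp
    next
      case False
      hence "I v \<inter> U j = {}" using j IH(3) by simp
      then show ?thesis using sub by blast
    qed
  qed
qed

lemma find_j:
  fixes f :: "nat \<Rightarrow> real"
  shows "f 1 \<le> x \<Longrightarrow> x < f (N+1) \<Longrightarrow> \<exists>j. 1 \<le> j \<and> j \<le> N \<and> f j \<le> x \<and> x < f (j+1)"
proof (induction N)
  case 0 then show ?case by simp
next
  case (Suc N)
  show ?case
  proof (cases "x < f (N+1)")
    case True then show ?thesis using Suc by (metis le_SucI)
  next
    case False then show ?thesis using Suc by (intro exI[of _ "Suc N"]) auto
  qed
qed

lemma unpack:
  assumes Lf_prop: "\<forall>P \<in> Ccal s \<theta> c. case P of (p, q, r) \<Rightarrow> case Lf P of (A, B, C) \<Rightarrow>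
                   line_ok (A, B, C) \<and> on_line (A, B, C) (p, q, r) \<and>
                   real_of_int \<bar>A\<bar> \<le> of_int q powr s \<and> real_of_int B \<le> of_int q powr t"
    and P: "P \<in> Ccal s \<theta> c"
  obtains p q r A B C where "P = (p,q,r)" "Lf P = (A,B,C)" "q > 0" "gcd (gcd p q) r = 1"
    "\<bar>\<theta> - real_of_int p / real_of_int q\<bar> < c / real_of_int q powr (1+s)" "B > 0" "gcd (gcd A B) C = 1"
    "real_of_int r / real_of_int q = (real_of_int A * (real_of_int p / real_of_int q) + real_of_int C) / real_of_int B"
    "\<bar>real_of_int A\<bar> \<le> real_of_int q powr s" "real_of_int B \<le> real_of_int q powr t"
proof -
  obtain p q r where Pe: "P = (p,q,r)" by (cases P) auto
  obtain A B C where Le: "Lf P = (A,B,C)" by (cases "Lf P") auto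
  have h1: "q > 0" "gcd (gcd p q) r = 1" "\<bar>\<theta> - real_of_int p / real_of_int q\<bar> < c / real_of_int q powr (1+s)"
    using P unfolding Pe Ccal_def rat_point_def by auto
  have h2: "line_ok (A, B, C) \<and> on_line (A, B, C) (p, q, r) \<and>
                   real_of_int \<bar>A\<bar> \<le> of_int q powr s \<and> real_of_int B \<le> of_int q powr t"
    using Lf_prop P Pe Le by force
  show ?thesis
    using that[OF Pe Le h1] h2 unfolding line_ok_def on_line_def by auto
qed
lemma int_abs_lt1:
  fixes z :: int
  assumes "\<bar>real_of_int z\<bar> < 1" shows "z = 0"
  using assms by linarith

lemma lines_eq_from_points:
  fixes p q r p' q' r' A B C A' B' C' :: int
  assumes q: "q>0" "q'>0" and g: "gcd (gcd p q) r = 1" "gcd (gcd p' q') r' = 1"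
    and B: "B>0" "B'>0" and gl: "gcd (gcd A B) C = 1" "gcd (gcd A' B') C' = 1"
    and e1: "B*r = A*p + C*q" and e2: "B*r' = A*p' + C*q'"
    and e3: "B'*r = A'*p + C'*q" and e4: "B'*r' = A'*p' + C'*q'"
  shows "(A,B,C) = (A',B',C') \<or> (p,q,r) = (p',q',r')"
proof (cases "p*q' = p'*q")
  case True
  have "B*(r*q') = B*(r'*q)"
  proof -
    have "B*(r*q') = (B*r)*q'" by (simp add: mult.assoc)
    also have "\<dots> = (A*p + C*q)*q'" using e1 by simp
    also have "\<dots> = A*(p*q') + C*q*q'" by (simp add: algebra_simps)
    also have "\<dots> = A*(p'*q) + C*q*q'" using True by simp
    also have "\<dots> = (A*p' + C*q')*q" by (simp add: algebra_simps)
    also have "\<dots> = (B*r')*q" using e2 by simp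
    also have "\<dots> = B*(r'*q)" by (simp add: mult.assoc)
    finally show ?thesis .
  qed
  hence "r*q' = r'*q" using B by simp
  with True norm_eq[OF q g] show ?thesis by simp
next
  case False
  define a where "a = A*B' - A'*B"
  define b where "b = C*B' - C'*B"
  have h1: "a*p + b*q = 0"
  proof -
    have "a*p + b*q = B'*(A*p + C*q) - B*(A'*p + C'*q)" by (simp add: a_def b_def algebra_simps)
    also have "\<dots> = B'*(B*r) - B*(B'*r)" using e1 e3 by simp
    also have "\<dots> = 0" by (simp add: algebra_simps)
    finally show ?thesis .
  qed
  have h2: "a*p' + b*q' = 0"
  proof -
    have "a*p' + b*q' = B'*(A*p' + C*q') - B*(A'*p' + C'*q')" by (simp add: a_def b_def algebra_simps)
    also have "\<dots> = B'*(B*r') - B*(B'*r')" using e2 e4 by simp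
    also have "\<dots> = 0" by (simp add: algebra_simps)
    finally show ?thesis .
  qed
  have "a*(p*q' - p'*q) = (a*p + b*q)*q' - (a*p' + b*q')*q" by (simp add: algebra_simps)
  hence "a*(p*q' - p'*q) = 0" using h1 h2 by simp
  hence a0: "a = 0" using False by simp
  have "b*(p*q' - p'*q) = (a*p' + b*q')*p - (a*p + b*q)*p'" by (simp add: algebra_simps)
  hence "b*(p*q' - p'*q) = 0" using h1 h2 by simp
  hence b0: "b = 0" using False by simp
  have "A = A' \<and> B = B' \<and> C = C'"
    using norm_eq[OF B gl] a0 b0 unfolding a_def b_def by simp
  thus ?thesis by simp
qed

lemma Cnk_sub: "Cnk s t \<theta> c l R Lf n k \<subseteq> Cn s \<theta> c l R Lf n"
  unfolding Cnk_def Let_def by (cases "k = 1") auto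
theorem lemma4p2:
  fixes s t \<theta> \<beta> a0 b0 :: real
    and Lf :: "int \<times> int \<times> int \<Rightarrow> int \<times> int \<times> int"
    and I :: "nat list \<Rightarrow> real set"
    and n k :: nat and \<tau> :: "nat list"
  defines "R \<equiv> Rpar \<beta>"
  defines "l \<equiv> b0 - a0"
  defines "c \<equiv> cpar s t \<theta> l R"
  defines "m \<equiv> nat \<lfloor>R\<rfloor>"
  assumes st: "s > 0" "t > 0" "s + t = 1"
    and dioph: "dioph_const s \<theta> > 0"
    and beta: "0 < \<beta>" "\<beta> < 1"
    and A0: "a0 < b0"
    and Lf_prop: "\<forall>P \<in> Ccal s \<theta> c. case P of (p, q, r) \<Rightarrow> case Lf P of (A, B, C) \<Rightarrow>
                   line_ok (A, B, C) \<and> on_line (A, B, C) (p, q, r) \<and>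
                   real_of_int \<bar>A\<bar> \<le> of_int q powr s \<and> real_of_int B \<le> of_int q powr t"
    and I_int: "\<forall>v \<in> tree_verts m. \<exists>a b. a \<le> b \<and> I v = {a..b} \<and>
                   b - a = l * R powr (- real (length v))"
    and I_sub: "\<forall>v \<in> tree_verts m. I v \<subseteq> {a0..b0}"
    and I_inj: "inj_on I (tree_verts m)"
    and I_mono: "\<forall>v \<in> tree_verts m. \<forall>w. v @ w \<in> tree_verts m \<longrightarrow> I (v @ w) \<subseteq> I v"
    and I_disj: "\<forall>v \<in> tree_verts m. \<forall>i<m. \<forall>j<m. i \<noteq> j \<longrightarrow>
                   interior (I (v @ [i])) \<inter> interior (I (v @ [j])) = {}"
    and I_conn: "\<forall>v \<in> tree_verts m. connected (\<Union>i<m. I (v @ [i]))"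
    and nk: "1 \<le> n" "1 \<le> k" "k \<le> n"
    and tau: "\<tau> \<in> Sset m (\<lambda>j. \<Union>P \<in> Cn s \<theta> c l R Lf j. Delta t c P) I (n - k)"
  shows "\<forall>P \<in> Cnk s t \<theta> c l R Lf n k. \<forall>P' \<in> Cnk s t \<theta> c l R Lf n k.
           I \<tau> \<inter> Delta t c P \<noteq> {} \<longrightarrow> I \<tau> \<inter> Delta t c P' \<noteq> {} \<longrightarrow> Lf P = Lf P'"
proof -
  have t1: "t < 1" "s = 1 - t" using st by auto
  have l0: "l > 0" using A0 l_def by simp
  have R16: "R \<ge> 16"
  proof -
    have "\<beta> powr (-4) = inverse (\<beta>^4)" using beta by (simp add: powr_minus powr_numeral)
    moreover have "\<beta>^4 < 1" using beta by (simp add: power_less_one_iff)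
    moreover have "\<beta>^4 > 0" using beta by simp
    ultimately have "\<beta> powr (-4) \<ge> 1" by (simp add: one_le_inverse)
    thus ?thesis unfolding R_def Rpar_def by simp
  qed
  have R0: "R > 0" "R > 1" using R16 by auto
  define lam where "lam = 3 / t^2"
  define mu where "mu = 1 / (t * (1 + t))"
  have lam0: "lam \<ge> 3"
  proof -
    have "t^2 \<le> 1" using st t1 by (simp add: power_le_one)
    thus ?thesis unfolding lam_def using st by (simp add: divide_simps)
  qed
  have mu0: "2*mu \<ge> 1"
  proof -
    have "t*(1+t) \<le> 1*2" using st t1 by (intro mult_mono) auto
    thus ?thesis unfolding mu_def using st by (simp add: divide_simps)
  qed
  have cdef: "c = min (dioph_const s \<theta>) (min (l / (4 * R)) (R powr (-2 - lam) / 8))"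
    unfolding c_def cpar_def lam_def by simp
  have c0: "c > 0" using cdef dioph l0 R0 by simp
  have cl: "c \<le> l / (4*R)" using cdef by simp
  have c8: "8*c \<le> R powr (-2 - lam)" using cdef by simp
  have tauP: "\<tau> \<in> tree_verts m" "length \<tau> = n - k"
    "\<forall>j. 1 \<le> j \<and> j \<le> n - k \<longrightarrow> I \<tau> \<inter> (\<Union>P \<in> Cn s \<theta> c l R Lf j. Delta t c P) = {}"
    using Sset_props[OF I_mono tau] by auto
  obtain ia ib where iab: "ia \<le> ib" "I \<tau> = {ia..ib}" "ib - ia = l * R powr (- real (n-k))"
  proof -
    from bspec[OF I_int tauP(1)] obtain a b where "a \<le> b" "I \<tau> = {a..b}"
      "b - a = l * R powr (- real (length \<tau>))" by blast
    thus ?thesis using that tauP(2) by simp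
  qed
  define H where "H = Hn c l R (n+1)"
  have H0: "H > 0" unfolding H_def Hn_def using c0 l0 R0 by simp
  have Hn_pow: "\<And>j. Hn c l R j = 4*c/l * R powr (real j)"
    unfolding Hn_def using R0 by (simp add: powr_realpow divide_inverse)
  have HR: "Hn c l R n = H/R"
    unfolding H_def Hn_pow using R0 by (simp add: powr_add)
  have H1: "Hn c l R 1 \<le> 1" unfolding Hn_pow using cl l0 R0 by (simp add: field_simps)
  have intv: "l * R powr (- real (n-k)) = 4*c*R powr (real k + 1)/H"
  proof -
    have "4*c*R powr (real k + 1)/H = l * (R powr (real k + 1) / R powr (real n + 1))"
      unfolding H_def Hn_pow using c0 l0 R0 by (simp add: field_simps)
    also have "R powr (real k + 1) / R powr (real n + 1) = R powr (- real (n-k))"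
      using nk R0 by (simp add: powr_diff[symmetric] of_nat_diff)
    finally show ?thesis by simp
  qed
  have HnK: "H * R powr (- real k) = Hn c l R (n - k + 1)"
    unfolding H_def Hn_pow using nk R0
    by (simp add: mult.assoc powr_add[symmetric] of_nat_diff add_diff_eq)
  show ?thesis
  proof (intro ballI impI)
    fix P P' assume PC: "P \<in> Cnk s t \<theta> c l R Lf n k" "P' \<in> Cnk s t \<theta> c l R Lf n k"
      and ne: "I \<tau> \<inter> Delta t c P \<noteq> {}" "I \<tau> \<inter> Delta t c P' \<noteq> {}"
    have PCn: "P \<in> Cn s \<theta> c l R Lf n" "P' \<in> Cn s \<theta> c l R Lf n"
      using PC Cnk_sub by blast+
    hence PC0: "P \<in> Ccal s \<theta> c" "P' \<in> Ccal s \<theta> c" by (auto simp: Cn_def)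
    obtain p q r A B C where P: "P = (p,q,r)" "Lf P = (A,B,C)" "q > 0" "gcd (gcd p q) r = 1"
      "\<bar>\<theta> - real_of_int p / real_of_int q\<bar> < c / real_of_int q powr (1+s)" "B > 0" "gcd (gcd A B) C = 1"
      "real_of_int r / real_of_int q = (real_of_int A * (real_of_int p / real_of_int q) + real_of_int C) / real_of_int B"
      "\<bar>real_of_int A\<bar> \<le> real_of_int q powr s" "real_of_int B \<le> real_of_int q powr t"
      by (rule unpack[OF Lf_prop PC0(1)])
    obtain p' q' r' A' B' C' where P': "P' = (p',q',r')" "Lf P' = (A',B',C')" "q' > 0" "gcd (gcd p' q') r' = 1"
      "\<bar>\<theta> - real_of_int p' / real_of_int q'\<bar> < c / real_of_int q' powr (1+s)" "B' > 0" "gcd (gcd A' B') C' = 1"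
      "real_of_int r' / real_of_int q' = (real_of_int A' * (real_of_int p' / real_of_int q') + real_of_int C') / real_of_int B'"
      "\<bar>real_of_int A'\<bar> \<le> real_of_int q' powr s" "real_of_int B' \<le> real_of_int q' powr t"
      by (rule unpack[OF Lf_prop PC0(2)])
    obtain y where y: "y \<in> I \<tau>" "\<bar>y - real_of_int r / real_of_int q\<bar> < c / real_of_int q powr (1+t)"
      using ne(1) unfolding P(1) Delta_def by auto
    obtain y' where y': "y' \<in> I \<tau>" "\<bar>y' - real_of_int r' / real_of_int q'\<bar> < c / real_of_int q' powr (1+t)"
      using ne(2) unfolding P'(1) Delta_def by auto
    have yy: "\<bar>y - y'\<bar> \<le> 4*c*R powr (real k + 1)/H"
      using y(1) y'(1) iab intv by auto
    have qB: "H/R \<le> real_of_int q * real_of_int B" "real_of_int q * real_of_int B < H"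
      using PCn(1) P(1,2) HR unfolding Cn_def qof_def Bof_def H_def by auto
    have qB': "H/R \<le> real_of_int q' * real_of_int B'" "real_of_int q' * real_of_int B' < H"
      using PCn(2) P'(1,2) HR unfolding Cn_def qof_def Bof_def H_def by auto
    have eqP: "B*r = A*p + C*q"
    proof -
      have "real_of_int B * real_of_int r = real_of_int A * real_of_int p + real_of_int C * real_of_int q"
        using P(3,6,8) by (simp add: field_simps)
      thus ?thesis by (metis of_int_add of_int_mult of_int_eq_iff)
    qed
    have eqP': "B'*r' = A'*p' + C'*q'"
    proof -
      have "real_of_int B' * real_of_int r' = real_of_int A' * real_of_int p' + real_of_int C' * real_of_int q'"
        using P'(3,6,8) by (simp add: field_simps)
      thus ?thesis by (metis of_int_add of_int_mult of_int_eq_iff)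
    qed
    show "Lf P = Lf P'"
    proof (cases "k = 1")
      case True
      define X where "X = H powr (t/(1+t))"
      have X0: "X > 0" unfolding X_def using H0 by simp
      have Bk: "X * R powr (-lam) \<le> real_of_int B" "real_of_int B < X"
        using PC(1) P(1,2) True unfolding Cnk_def Let_def Bof_def H_def lam_def X_def by auto
      have Bk': "X * R powr (-lam) \<le> real_of_int B'" "real_of_int B' < X"
        using PC(2) P'(1,2) True unfolding Cnk_def Let_def Bof_def H_def lam_def X_def by auto
      define La where "La = R powr lam"
      have La1: "La \<ge> 1"
      proof -
        have "R powr 0 \<le> R powr lam" using R0 lam0 by (intro powr_mono) auto
        thus ?thesis unfolding La_def using R0 by simp
      qed
      have XL: "X = X * R powr (-lam) * La" unfolding La_def using R0
        by (simp add: mult.assoc powr_add[symmetric])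
      have BL: "real_of_int B < real_of_int B' * La"
      proof -
        have "X * R powr (-lam) * La \<le> real_of_int B' * La" using Bk' La1 by (intro mult_right_mono) auto
        thus ?thesis using Bk XL by linarith
      qed
      have BL': "real_of_int B' < real_of_int B * La"
      proof -
        have "X * R powr (-lam) * La \<le> real_of_int B * La" using Bk La1 by (intro mult_right_mono) auto
        thus ?thesis using Bk' XL by linarith
      qed
      have La8: "8*c*R^2*La \<le> 1"
      proof -
        have "8*c*R^2*La \<le> R powr (-2 - lam) * R^2 * La"
          using c8 La1 R0 by (intro mult_right_mono) auto
        also have "R powr (-2 - lam) * R^2 * La = 1"
        proof -
          have "R powr (-2 - lam) * R powr 2 * R powr lam = R powr 0"
            by (simp only: powr_add[symmetric]) simp
          thus ?thesis unfolding La_def using R0 by (simp add: powr_numeral)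
        qed
        finally show ?thesis .
      qed
      have R2: "R powr (real k + 1) = R^2" using True R0 by (simp add: powr_numeral)
      have yy1: "\<bar>y - y'\<bar> \<le> 4*c*R^2/H" using yy R2 by simp
      have yy1': "\<bar>y' - y\<bar> \<le> 4*c*R^2/H" using yy1 by linarith
      have rq: "real_of_int q > 0" "real_of_int B > 0" "real_of_int q' > 0" "real_of_int B' > 0"
        using P(3,6) P'(3,6) by auto
      have k1a: "\<bar>real_of_int A * real_of_int p' + real_of_int C * real_of_int q' - real_of_int B * real_of_int r'\<bar> < 1"
        by (rule k1_core[OF rq(1) rq(2) c0 rq(3) rq(4) st P(5) P'(5) P(8) P(9) P(10) P'(10) y(2) y'(2) yy1 R16 H0 qB qB' La1 La8 BL BL'])
      have k1b: "\<bar>real_of_int A' * real_of_int p + real_of_int C' * real_of_int q - real_of_int B' * real_of_int r\<bar> < 1"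
        by (rule k1_core[OF rq(3) rq(4) c0 rq(1) rq(2) st P'(5) P(5) P'(8) P'(9) P'(10) P(10) y'(2) y(2) yy1' R16 H0 qB' qB La1 La8 BL' BL])
      have "A*p' + C*q' - B*r' = 0" using k1a by (intro int_abs_lt1) simp
      hence e2: "B*r' = A*p' + C*q'" by simp
      have "A'*p + C'*q - B'*r = 0" using k1b by (intro int_abs_lt1) simp
      hence e3: "B'*r = A'*p + C'*q" by simp
      from lines_eq_from_points[OF P(3) P'(3) P(4) P'(4) P(6) P'(6) P(7) P'(7) eqP e2 e3 eqP']
      show ?thesis using P(1,2) P'(1,2) by auto
    next
      case False
      have k2: "k \<ge> 2" using False nk by simp
      define K where "K = real k"
      define G where "G = H powr (1/(1+t))"
      define w where "w = lam + (real k - 2) * mu"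
      have qB1: "real_of_int q * real_of_int B \<ge> 1"
      proof -
        have "q * B \<ge> 1" using P(3,6) by (simp add: int_one_le_iff_zero_less)
        thus ?thesis by (metis of_int_1_le_iff of_int_mult)
      qed
      have H1': "H \<ge> 1" using qB1 qB by linarith
      have G1: "G \<ge> 1" unfolding G_def using H1' st by (simp add: ge_one_powr_ge_zero)
      have G0: "G > 0" using G1 by simp
      have HG: "H = G powr (1+t)" unfolding G_def using H0 st by (simp add: powr_powr)
      have XG: "H powr (t/(1+t)) = G powr t" unfolding G_def using H0 st by (simp add: powr_powr)
      have XG2: "Hn c l R (Suc n) powr (t/(1+t)) = G powr t" using XG unfolding H_def by simp
      have ew1: "-lam - (real k - 1) * mu = -w-mu" unfolding w_def by (simp add: algebra_simps)
      have ew2: "-lam - (real k - 2) * mu = -w" unfolding w_def by (simp add: algebra_simps)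
      have Bk: "G powr t * R powr (-w-mu) \<le> real_of_int B" "real_of_int B < G powr t * R powr (-w)"
        using PC(1) P(1,2) False unfolding Cnk_def Let_def Bof_def
        by (simp_all add: XG2 lam_def[symmetric] mu_def[symmetric] ew1 ew2)
      have Bk': "G powr t * R powr (-w-mu) \<le> real_of_int B'" "real_of_int B' < G powr t * R powr (-w)"
        using PC(2) P'(1,2) False unfolding Cnk_def Let_def Bof_def
        by (simp_all add: XG2 lam_def[symmetric] mu_def[symmetric] ew1 ew2)
      have ex1: "(1+t)*(s*mu - t*w) \<le> -K - 4"
      proof -
        have "(1+t)*(s*mu - t*w) = -2/t - 2 - K"
        proof -
          have nz: "t + t*t \<noteq> 0" "1 + t \<noteq> 0" "t \<noteq> 0" using st by (smt (verit) mult_pos_pos)+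
          have m1: "(1+t)*mu = 1/t" unfolding mu_def using nz by (simp add: field_simps)
          have l1: "t*lam = 3/t" unfolding lam_def using nz by (simp add: field_simps power2_eq_square)
          have "(1+t)*(s*mu - t*w) = s*((1+t)*mu) - (1+t)*(t*lam) - (real k - 2)*(t*((1+t)*mu))"
            unfolding w_def by (simp add: algebra_simps)
          also have "\<dots> = s/t - (1+t)*(3/t) - (real k - 2)" using m1 l1 nz by simp
          also have "\<dots> = -2/t - 2 - K" unfolding K_def t1(2) using nz by (simp add: field_simps)
          finally show ?thesis .
        qed
        moreover have "2/t \<ge> 2" using st t1 by (simp add: divide_simps)
        ultimately show ?thesis by linarith
      qed
      have ex2: "2*w \<ge> K + 4"
      proof -
        have "2*((real k - 2) * mu) \<ge> real k - 2"
        proof -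
          have "real k - 2 \<ge> 0" using k2 by simp
          hence "(real k - 2) * 1 \<le> (real k - 2) * (2*mu)" using mu0 by (intro mult_left_mono) auto
          thus ?thesis by (simp add: algebra_simps)
        qed
        moreover have "2*w = 2*lam + 2*((real k - 2) * mu)" unfolding w_def by (simp add: algebra_simps)
        ultimately show ?thesis unfolding K_def using lam0 by linarith
      qed
      have c8': "8*c*R^2 \<le> 1"
      proof -
        have "R powr (-2 - lam) \<le> R powr (-2)" using lam0 R0 by (intro powr_mono) auto
        hence "8*c \<le> R powr (-2)" using c8 by linarith
        hence "8*c*R^2 \<le> R powr (-2) * R^2" using R0 by (intro mult_right_mono) auto
        also have "R powr (-2) * R^2 = 1" using R0 by (simp add: powr_minus powr_numeral)
        finally show ?thesis .
      qed
      have rq: "real_of_int q > 0" "real_of_int B > 0" "real_of_int q' > 0" "real_of_int B' > 0"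
        using P(3,6) P'(3,6) by auto
      have hf: "\<bar>y - (real_of_int A*\<theta>+real_of_int C)/real_of_int B\<bar> < 2*c/(real_of_int q*real_of_int B)"
        by (rule near_f[OF rq(1) rq(2) c0 P(5) P(8) P(9) P(10) y(2)])
      have hf': "\<bar>y' - (real_of_int A'*\<theta>+real_of_int C')/real_of_int B'\<bar> < 2*c/(real_of_int q'*real_of_int B')"
        by (rule near_f[OF rq(3) rq(4) c0 P'(5) P'(8) P'(9) P'(10) y'(2)])
      have yyK: "\<bar>y - y'\<bar> \<le> 4*c*R powr (K+1)/H" using yy unfolding K_def .
      have K0: "K \<ge> 0" unfolding K_def by simp
      note core = kge2_core[OF rq(1) rq(2) rq(3) rq(4) c0 st hf hf' P(9) P'(9) yyK R16 G1 HG K0 qB qB' Bk Bk' ex1 ex2 c8']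
      define a where "a = A*B' - A'*B"
      define b where "b = C*B' - C'*B"
      define e where "e = A*C' - A'*C"
      have ra: "real_of_int a = real_of_int A * real_of_int B' - real_of_int A' * real_of_int B"
        "real_of_int b = real_of_int C * real_of_int B' - real_of_int C' * real_of_int B"
        "real_of_int e = real_of_int A * real_of_int C' - real_of_int A' * real_of_int C"
        unfolding a_def b_def e_def by simp_all
      show ?thesis
      proof (cases "a = 0")
        case True
        have "\<bar>real_of_int b\<bar> < 1" using core(1) True ra by simp
        hence "b = 0" by (rule int_abs_lt1)
        hence "A = A' \<and> B = B' \<and> C = C'"
          using norm_eq[OF P(6) P'(6) P(7) P'(7)] True unfolding a_def b_def by simp
        thus ?thesis using P(2) P'(2) by simp
      next
        case False
        have ra0: "real_of_int A * real_of_int B' - real_of_int A' * real_of_int B \<noteq> 0"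
          using False ra(1) by (metis of_int_eq_0_iff)
        have c2: "\<bar>\<theta> + real_of_int b / real_of_int a\<bar> < c / \<bar>real_of_int a\<bar> powr (1+s)"
          "\<bar>y - real_of_int e / real_of_int a\<bar> < c / \<bar>real_of_int a\<bar> powr (1+t)"
          "\<bar>real_of_int a\<bar> powr (1+t) < H * R powr (-K)"
          using core(2)[OF ra0] unfolding ra by auto
        obtain p2 q2 r2 where Q: "q2 > 0" "gcd (gcd p2 q2) r2 = 1" "q2 \<le> \<bar>a\<bar>"
          "real_of_int p2 / real_of_int q2 = real_of_int (-b) / real_of_int a"
          "real_of_int r2 / real_of_int q2 = real_of_int e / real_of_int a"
          using reduce_point[OF False] by metis
        have rq2: "real_of_int q2 > 0" "real_of_int q2 \<le> \<bar>real_of_int a\<bar>" using Q by auto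
        have mon1: "c / \<bar>real_of_int a\<bar> powr (1+s) \<le> c / real_of_int q2 powr (1+s)"
          using rq2 c0 st by (intro divide_left_mono powr_mono2 mult_pos_pos) auto
        have mon2: "c / \<bar>real_of_int a\<bar> powr (1+t) \<le> c / real_of_int q2 powr (1+t)"
          using rq2 c0 st by (intro divide_left_mono powr_mono2 mult_pos_pos) auto
        define P2 where "P2 = (p2, q2, r2)"
        have P2C: "P2 \<in> Ccal s \<theta> c"
        proof -
          have "\<bar>\<theta> - real_of_int p2 / real_of_int q2\<bar> = \<bar>\<theta> + real_of_int b / real_of_int a\<bar>"
            using Q(4) by simp
          thus ?thesis unfolding P2_def Ccal_def rat_point_def using Q(1,2) c2(1) mon1 by simp
        qed
        have yD: "y \<in> Delta t c P2"
          unfolding P2_def Delta_def using Q(5) c2(2) mon2 by simp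
        obtain p3 q3 r3 A2 B2 C2 where P3: "P2 = (p3,q3,r3)" "Lf P2 = (A2,B2,C2)" "q3 > 0" "gcd (gcd p3 q3) r3 = 1"
          "\<bar>\<theta> - real_of_int p3 / real_of_int q3\<bar> < c / real_of_int q3 powr (1+s)" "B2 > 0" "gcd (gcd A2 B2) C2 = 1"
          "real_of_int r3 / real_of_int q3 = (real_of_int A2 * (real_of_int p3 / real_of_int q3) + real_of_int C2) / real_of_int B2"
          "\<bar>real_of_int A2\<bar> \<le> real_of_int q3 powr s" "real_of_int B2 \<le> real_of_int q3 powr t"
          by (rule unpack[OF Lf_prop P2C])
        have q3: "q3 = q2" using P3(1) unfolding P2_def by simp
        define x where "x = real_of_int (qof P2 * Bof (Lf P2))"
        have xe: "x = real_of_int q2 * real_of_int B2" unfolding x_def qof_def Bof_def P2_def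
          using P3(2) q3 unfolding P2_def by simp
        have x1: "x \<ge> 1"
        proof -
          have "q2 * B2 \<ge> 1" using Q(1) P3(6) by (simp add: int_one_le_iff_zero_less)
          thus ?thesis unfolding xe by (metis of_int_1_le_iff of_int_mult)
        qed
        have x2: "x < Hn c l R (n - k + 1)"
        proof -
          have "x \<le> real_of_int q2 * real_of_int q2 powr t" unfolding xe
            using P3(10) q3 rq2 by (intro mult_left_mono) auto
          also have "\<dots> = real_of_int q2 powr (1+t)" using rq2 by (simp add: powr_add)
          also have "\<dots> \<le> \<bar>real_of_int a\<bar> powr (1+t)" using rq2 st by (intro powr_mono2) auto
          also have "\<dots> < H * R powr (-K)" by (rule c2(3))
          finally show ?thesis using HnK unfolding K_def by simp
        qed
        obtain j where j: "1 \<le> j" "j \<le> n - k" "Hn c l R j \<le> x" "x < Hn c l R (j+1)"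
          using find_j[of "Hn c l R" x "n-k"] H1 x1 x2 by auto
        have "P2 \<in> Cn s \<theta> c l R Lf j" unfolding Cn_def using P2C j x_def by simp
        hence "y \<in> I \<tau> \<inter> (\<Union>P \<in> Cn s \<theta> c l R Lf j. Delta t c P)" using y(1) yD by blast
        thus ?thesis using tauP(3) j by blast
      qed
    qed
  qed
qed
end
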